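(* For every integral domain $D$ and semistar operation $\star$ on $D$, $$\widetilde{\star}\text{-}\dim_v(D)=\sup\{\dim_v(D_P)\mid P\in\operatorname{QSpec}^{\widetilde{\star}}(D)\}.$$
   Context: $D$ is an integral domain with quotient field $K$; $f(D)$ denotes the nonzero finitely generated fractional ideals, $\overline{\mathcal F}(D)$ the nonzero $D$-submodules of $K$. A semistar operation $\star$ on $D$ is a map $\overline{\mathcal F}(D)\to\overline{\mathcal F}(D)$ with $(xE)^\star=xE^\star$ ($0\neq x\in K$), $E\subseteq F\Rightarrow E^\star\subseteq F^\star$, $E\subseteq E^\star=(E^\star)^\star$. $E^{\star_f}:=\bigcup\{F^\star:F\in f(D),F\subseteq E\}$. A nonzero ideal $I$ is a quasi-$\star$-ideal if $I^\star\cap D=I$; quasi-$\star$-primes/quasi-$\star$-maximal ideals are the prime ones / maximal proper ones; sets $\operatorname{QSpec}^\star(D)$, $\operatorname{QMax}^\star(D)$. $E^{\widetilde\star}:=\bigcap\{ED_M:M\in\operatorname{QMax}^{\star_f}(D)\}$ ($=K$ if empty). A valuation overring $V$ of $D$ is a $\star$-valuation overring if $F^\star\subseteq FV$ for all $F\in f(D)$. $\star$-$\dim_v(D):=\sup\{\dim V: V\text{ a }\star\text{-valuation overring of }D\}$, and $\dim_v(R)$ is the classical valuative dimension (supremum of dimensions of valuation overrings of $R$). *)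

theory Defs
  imports Main "HOL-Library.Extended_Nat"
begin

(* The quotient field K of D is modelled as a type 'k :: field; D is a subring
   of K such that every element of K is a quotient of elements of D. *)

definition subring :: "'k::field set \<Rightarrow> bool" where
  "subring R \<longleftrightarrow> 0 \<in> R \<and> 1 \<in> R \<and>
     (\<forall>a\<in>R. \<forall>b\<in>R. a + b \<in> R \<and> a * b \<in> R \<and> - a \<in> R)"

definition domain_with_qf :: "'k::field set \<Rightarrow> bool" where
  "domain_with_qf D \<longleftrightarrow> subring D \<and> (\<forall>x. \<exists>a\<in>D. \<exists>b\<in>D. b \<noteq> 0 \<and> x = a / b)"

definition submodule :: "'k::field set \<Rightarrow> 'k set \<Rightarrow> bool" where
  "submodule D E \<longleftrightarrow> 0 \<in> E \<and> (\<forall>a\<in>E. \<forall>b\<in>E. a + b \<in> E) \<and> (\<forall>d\<in>D. \<forall>a\<in>E. d * a \<in> E)"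

definition Fbar :: "'k::field set \<Rightarrow> 'k set set" where
  "Fbar D = {E. submodule D E \<and> E \<noteq> {0}}"

(* R-submodule of K generated by S (for S = F, R = V this is FV) *)
definition gen_mod :: "'k::field set \<Rightarrow> 'k set \<Rightarrow> 'k set" where
  "gen_mod R S = {(\<Sum>i<(n::nat). r i * s i) | n r s. \<forall>i<n. r i \<in> R \<and> s i \<in> S}"

definition fgset :: "'k::field set \<Rightarrow> 'k set set" where
  "fgset D = {E \<in> Fbar D. \<exists>S. finite S \<and> E = gen_mod D S}"

definition smult :: "'k::field \<Rightarrow> 'k set \<Rightarrow> 'k set" where
  "smult x E = (\<lambda>e. x * e) ` E"

definition semistar :: "'k::field set \<Rightarrow> ('k set \<Rightarrow> 'k set) \<Rightarrow> bool" where
  "semistar D st \<longleftrightarrow>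
     (\<forall>E\<in>Fbar D. st E \<in> Fbar D) \<and>
     (\<forall>E\<in>Fbar D. \<forall>x. x \<noteq> 0 \<longrightarrow> st (smult x E) = smult x (st E)) \<and>
     (\<forall>E\<in>Fbar D. \<forall>F\<in>Fbar D. E \<subseteq> F \<longrightarrow> st E \<subseteq> st F) \<and>
     (\<forall>E\<in>Fbar D. E \<subseteq> st E \<and> st (st E) = st E)"

definition star_f :: "'k::field set \<Rightarrow> ('k set \<Rightarrow> 'k set) \<Rightarrow> 'k set \<Rightarrow> 'k set" where
  "star_f D st E = \<Union>{st F | F. F \<in> fgset D \<and> F \<subseteq> E}"

definition ideal_of :: "'k::field set \<Rightarrow> 'k set \<Rightarrow> bool" where
  "ideal_of R I \<longleftrightarrow> I \<subseteq> R \<and> submodule R I"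

definition prime_ideal :: "'k::field set \<Rightarrow> 'k set \<Rightarrow> bool" where
  "prime_ideal R P \<longleftrightarrow> ideal_of R P \<and> 1 \<notin> P \<and>
     (\<forall>a\<in>R. \<forall>b\<in>R. a * b \<in> P \<longrightarrow> a \<in> P \<or> b \<in> P)"

definition quasi_ideal :: "'k::field set \<Rightarrow> ('k set \<Rightarrow> 'k set) \<Rightarrow> 'k set \<Rightarrow> bool" where
  "quasi_ideal D st I \<longleftrightarrow> ideal_of D I \<and> I \<noteq> {0} \<and> st I \<inter> D = I"

definition QSpec :: "'k::field set \<Rightarrow> ('k set \<Rightarrow> 'k set) \<Rightarrow> 'k set set" where
  "QSpec D st = {P. quasi_ideal D st P \<and> prime_ideal D P}"

definition QMax :: "'k::field set \<Rightarrow> ('k set \<Rightarrow> 'k set) \<Rightarrow> 'k set set" where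
  "QMax D st = {M. quasi_ideal D st M \<and> M \<noteq> D \<and>
      (\<forall>N. quasi_ideal D st N \<and> N \<noteq> D \<and> M \<subseteq> N \<longrightarrow> N = M)}"

definition localization :: "'k::field set \<Rightarrow> 'k set \<Rightarrow> 'k set" where
  "localization D P = {a / s | a s. a \<in> D \<and> s \<in> D \<and> s \<notin> P}"

definition ext_loc :: "'k::field set \<Rightarrow> 'k set \<Rightarrow> 'k set \<Rightarrow> 'k set" where
  "ext_loc D M E = {e / s | e s. e \<in> E \<and> s \<in> D \<and> s \<notin> M}"

(* \<star> tilde; the intersection over the empty family is UNIV = K *)
definition tilde :: "'k::field set \<Rightarrow> ('k set \<Rightarrow> 'k set) \<Rightarrow> 'k set \<Rightarrow> 'k set" where
  "tilde D st E = \<Inter>{ext_loc D M E | M. M \<in> QMax D (star_f D st)}"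

definition valuation_overring :: "'k::field set \<Rightarrow> 'k set \<Rightarrow> bool" where
  "valuation_overring R V \<longleftrightarrow> subring V \<and> R \<subseteq> V \<and>
     (\<forall>x. x \<noteq> 0 \<longrightarrow> x \<in> V \<or> inverse x \<in> V)"

definition star_valuation_overring :: "'k::field set \<Rightarrow> ('k set \<Rightarrow> 'k set) \<Rightarrow> 'k set \<Rightarrow> bool" where
  "star_valuation_overring D st V \<longleftrightarrow> valuation_overring D V \<and>
     (\<forall>F\<in>fgset D. st F \<subseteq> gen_mod V F)"

definition krull_dim :: "'k::field set \<Rightarrow> enat" where
  "krull_dim R = Sup {enat n | n. \<exists>c. (\<forall>i\<le>n. prime_ideal R (c i)) \<and> (\<forall>i<n. c i \<subset> c (Suc i))}"

definition star_dim_v :: "'k::field set \<Rightarrow> ('k set \<Rightarrow> 'k set) \<Rightarrow> enat" where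
  "star_dim_v D st = (SUP V \<in> {V. star_valuation_overring D st V}. krull_dim V)"

definition dim_v :: "'k::field set \<Rightarrow> enat" where
  "dim_v R = (SUP V \<in> {V. valuation_overring R V}. krull_dim V)"

end

theory Submission
  imports Defs
begin


lemma gen_mod_iff: "x \<in> gen_mod R S \<longleftrightarrow> (\<exists>n r s. x = (\<Sum>i<(n::nat). r i * s i) \<and> (\<forall>i<n. r i \<in> R \<and> s i \<in> S))"
  unfolding gen_mod_def by blast

lemma gen_mod_0: "0 \<in> gen_mod R S"
  unfolding gen_mod_iff by (rule exI[of _ 0]) auto

lemma gen_mod_step:
  assumes "x \<in> gen_mod R S" "a \<in> R" "b \<in> S"
  shows "x + a*b \<in> gen_mod R S"
proof -
  obtain n :: nat and r s where x: "x = (\<Sum>i<n. r i * s i)" and rs: "\<forall>i<n. r i \<in> R \<and> s i \<in> S"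
    using assms(1) unfolding gen_mod_iff by blast
  have "(\<Sum>i<Suc n. (r(n:=a)) i * (s(n:=b)) i) = (\<Sum>i<n. (r(n:=a)) i * (s(n:=b)) i) + a*b" by simp
  also have "(\<Sum>i<n. (r(n:=a)) i * (s(n:=b)) i) = (\<Sum>i<n. r i * s i)" by (rule sum.cong) auto
  finally have "x + a*b = (\<Sum>i<Suc n. (r(n:=a)) i * (s(n:=b)) i)" using x by simp
  moreover have "\<forall>i<Suc n. (r(n:=a)) i \<in> R \<and> (s(n:=b)) i \<in> S" using rs assms by (auto simp: less_Suc_eq)
  ultimately show ?thesis unfolding gen_mod_iff by blast
qed

lemma gen_mod_single: "a \<in> R \<Longrightarrow> b \<in> S \<Longrightarrow> a * b \<in> gen_mod R S"
  using gen_mod_step[OF gen_mod_0] by fastforce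

lemma gen_mod_base: "1 \<in> R \<Longrightarrow> b \<in> S \<Longrightarrow> b \<in> gen_mod R S"
  using gen_mod_single[of 1 R b S] by simp

lemma gen_mod_add:
  assumes "x \<in> gen_mod R S" "y \<in> gen_mod R S"
  shows "x + y \<in> gen_mod R S"
proof -
  obtain m :: nat and r s where y: "y = (\<Sum>i<m. r i * s i)" and rs: "\<forall>i<m. r i \<in> R \<and> s i \<in> S"
    using assms(2) unfolding gen_mod_iff by blast
  have "(\<forall>i<m. r i \<in> R \<and> s i \<in> S) \<longrightarrow> (\<forall>x\<in>gen_mod R S. x + (\<Sum>i<m. r i * s i) \<in> gen_mod R S)"
  proof (induction m)
    case 0 then show ?case by simp
  next
    case (Suc m)
    show ?case
    proof (intro impI ballI)
      fix x assume h: "\<forall>i<Suc m. r i \<in> R \<and> s i \<in> S" and x: "x \<in> gen_mod R S"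
      have "x + (\<Sum>i<m. r i * s i) \<in> gen_mod R S" using Suc h x by auto
      then have "(x + (\<Sum>i<m. r i * s i)) + r m * s m \<in> gen_mod R S" using h by (intro gen_mod_step) auto
      then show "x + (\<Sum>i<Suc m. r i * s i) \<in> gen_mod R S" by (simp add: add.assoc)
    qed
  qed
  then show ?thesis using rs y assms(1) by blast
qed

lemma gen_mod_mult:
  assumes "subring R" "d \<in> R" "x \<in> gen_mod R S"
  shows "d * x \<in> gen_mod R S"
proof -
  obtain n :: nat and r s where x: "x = (\<Sum>i<n. r i * s i)" and rs: "\<forall>i<n. r i \<in> R \<and> s i \<in> S"
    using assms(3) unfolding gen_mod_iff by blast
  have "d * x = (\<Sum>i<n. (d * r i) * s i)" using x by (simp add: sum_distrib_left mult.assoc)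
  moreover have "\<forall>i<n. d * r i \<in> R \<and> s i \<in> S" using rs assms(1,2) unfolding subring_def by blast
  ultimately show ?thesis unfolding gen_mod_iff
    by (intro exI[of _ n] exI[of _ "\<lambda>i. d * r i"] exI[of _ s]) simp
qed

lemma submodule_gen_mod: "subring R \<Longrightarrow> submodule R (gen_mod R S)"
  unfolding submodule_def using gen_mod_0 gen_mod_add gen_mod_mult by blast

lemma gen_mod_sub:
  assumes "submodule R E" "S \<subseteq> E"
  shows "gen_mod R S \<subseteq> E"
proof
  fix x assume "x \<in> gen_mod R S"
  then obtain n :: nat and r s where x: "x = (\<Sum>i<n. r i * s i)" and rs: "\<forall>i<n. r i \<in> R \<and> s i \<in> S"
    unfolding gen_mod_iff by blast
  have "(\<forall>i<n. r i \<in> R \<and> s i \<in> S) \<longrightarrow> (\<Sum>i<n. r i * s i) \<in> E"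
  proof (induction n)
    case 0 then show ?case using assms(1) unfolding submodule_def by simp
  next
    case (Suc n)
    show ?case
    proof
      assume h: "\<forall>i<Suc n. r i \<in> R \<and> s i \<in> S"
      then have "(\<Sum>i<n. r i * s i) \<in> E" using Suc by auto
      moreover have "r n * s n \<in> E" using h assms unfolding submodule_def by blast
      ultimately show "(\<Sum>i<Suc n. r i * s i) \<in> E" using assms(1) unfolding submodule_def by simp
    qed
  qed
  then show "x \<in> E" using x rs by blast
qed



lemma quasi_one:
  assumes "quasi_ideal D sf J" "J \<noteq> D"
  shows "1 \<notin> J"
proof
  assume one: "1 \<in> J"
  have JD: "J \<subseteq> D" and mul: "\<forall>d\<in>D. \<forall>a\<in>J. d * a \<in> J"
    using assms(1) unfolding quasi_ideal_def ideal_of_def submodule_def by auto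
  have "d \<in> J" if "d \<in> D" for d using mul one that by (metis mult.right_neutral)
  then have "J = D" using JD by blast
  then show False using assms(2) by blast
qed

context
  fixes D :: "'k::field set" and st :: "'k set \<Rightarrow> 'k set"
  assumes dom: "domain_with_qf D" and ss: "semistar D st"
begin

lemma sub: "subring D" using dom unfolding domain_with_qf_def by blast
lemma D0: "0 \<in> D" using sub unfolding subring_def by blast
lemma D1: "1 \<in> D" using sub unfolding subring_def by blast
lemma Dadd: "a \<in> D \<Longrightarrow> b \<in> D \<Longrightarrow> a + b \<in> D" using sub unfolding subring_def by blast
lemma Dmul: "a \<in> D \<Longrightarrow> b \<in> D \<Longrightarrow> a * b \<in> D" using sub unfolding subring_def by blast

lemma ss1: "\<forall>E\<in>Fbar D. st E \<in> Fbar D"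
  using ss[unfolded semistar_def] by (elim conjE) assumption
lemma ss3: "\<forall>E\<in>Fbar D. \<forall>F\<in>Fbar D. E \<subseteq> F \<longrightarrow> st E \<subseteq> st F"
  using ss[unfolded semistar_def] by (elim conjE) assumption
lemma ss4: "\<forall>E\<in>Fbar D. E \<subseteq> st E \<and> st (st E) = st E"
  using ss[unfolded semistar_def] by (elim conjE) assumption

lemma st_Fbar: "F \<in> Fbar D \<Longrightarrow> st F \<in> Fbar D" using ss1 by (rule bspec)
lemma st_ext: "F \<in> Fbar D \<Longrightarrow> F \<subseteq> st F" using ss4 by (auto dest: bspec)
lemma st_mono: "F \<in> Fbar D \<Longrightarrow> G \<in> Fbar D \<Longrightarrow> F \<subseteq> G \<Longrightarrow> st F \<subseteq> st G"
  using ss3 by blast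
lemma st_idem: "F \<in> Fbar D \<Longrightarrow> st (st F) = st F" using ss4 by (auto dest: bspec)
lemma st_sub: "F \<in> Fbar D \<Longrightarrow> submodule D (st F)" using st_Fbar unfolding Fbar_def by blast

lemma fg_Fbar: "F \<in> fgset D \<Longrightarrow> F \<in> Fbar D" unfolding fgset_def by blast

lemma fg_intro: assumes "finite S" "s \<in> S" "s \<noteq> 0" shows "gen_mod D S \<in> fgset D"
proof -
  have "s \<in> gen_mod D S" using gen_mod_base[OF D1 assms(2)] .
  then have "gen_mod D S \<noteq> {0}" using assms(3) by blast
  then show ?thesis unfolding fgset_def Fbar_def using submodule_gen_mod[OF sub] assms(1) by blast
qed

lemma sf_iff: "x \<in> star_f D st E \<longleftrightarrow> (\<exists>F. F \<in> fgset D \<and> F \<subseteq> E \<and> x \<in> st F)"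
  unfolding star_f_def by blast

lemma sub_sf:
  assumes J: "submodule D J" "J \<noteq> {0}"
  shows "J \<subseteq> star_f D st J"
proof
  fix x assume x: "x \<in> J"
  obtain j where j: "j \<in> J" "j \<noteq> 0" using J unfolding submodule_def by blast
  define y where "y = (if x = 0 then j else x)"
  have y: "y \<in> J" "y \<noteq> 0" using j x unfolding y_def by auto
  let ?F = "gen_mod D {y}"
  have F: "?F \<in> fgset D" using fg_intro[of "{y}" y] y by simp
  have FJ: "?F \<subseteq> J" by (rule gen_mod_sub) (use J y in auto)
  have "y \<in> st ?F" using gen_mod_base[OF D1, of y "{y}"] st_ext[OF fg_Fbar[OF F]] by auto
  moreover have "0 \<in> st ?F" using st_sub[OF fg_Fbar[OF F]] unfolding submodule_def by blast
  ultimately have "x \<in> st ?F" unfolding y_def by (cases "x = 0") auto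
  then show "x \<in> star_f D st J" unfolding sf_iff using F FJ by blast
qed

lemma fg_gen: assumes "F \<in> fgset D" obtains S where "finite S" "F = gen_mod D S" "S \<subseteq> F"
proof -
  obtain S where S: "finite S" "F = gen_mod D S" using assms unfolding fgset_def by blast
  have "S \<subseteq> F" using S(2) gen_mod_base[OF D1] by blast
  then show ?thesis using S that by blast
qed

lemma dir:
  assumes Q: "submodule D Q" "Q \<noteq> {0}" and fin: "finite S"
  shows "S \<subseteq> star_f D st Q \<Longrightarrow> \<exists>G\<in>fgset D. G \<subseteq> Q \<and> S \<subseteq> st G"
  using fin
proof (induction S rule: finite_induct)
  case empty
  obtain q where q: "q \<in> Q" "q \<noteq> 0" using Q unfolding submodule_def by blast
  have "gen_mod D {q} \<in> fgset D" using fg_intro[of "{q}" q] q by simp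
  moreover have "gen_mod D {q} \<subseteq> Q" by (rule gen_mod_sub) (use Q q in auto)
  ultimately show ?case by blast
next
  case (insert s S)
  have "S \<subseteq> star_f D st Q" using insert.prems by simp
  then obtain G2 where G2: "G2 \<in> fgset D" "G2 \<subseteq> Q" "S \<subseteq> st G2" using insert.IH by blast
  have "s \<in> star_f D st Q" using insert.prems by simp
  then obtain G1 where G1: "G1 \<in> fgset D" "G1 \<subseteq> Q" "s \<in> st G1" unfolding sf_iff by blast
  obtain S1 where S1: "finite S1" "G1 = gen_mod D S1" "S1 \<subseteq> G1" using fg_gen[OF G1(1)] by blast
  obtain S2 where S2: "finite S2" "G2 = gen_mod D S2" "S2 \<subseteq> G2" using fg_gen[OF G2(1)] by blast
  let ?G = "gen_mod D (S1 \<union> S2)"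
  have subG: "submodule D ?G" by (rule submodule_gen_mod[OF sub])
  have G1G: "G1 \<subseteq> ?G" unfolding S1(2) by (rule gen_mod_sub[OF subG]) (use gen_mod_base[OF D1] in blast)
  have G2G: "G2 \<subseteq> ?G" unfolding S2(2) by (rule gen_mod_sub[OF subG]) (use gen_mod_base[OF D1] in blast)
  have GQ: "?G \<subseteq> Q" by (rule gen_mod_sub) (use Q S1 S2 G1 G2 in auto)
  obtain g where "g \<in> G1" "g \<noteq> 0" using fg_Fbar[OF G1(1)] unfolding Fbar_def submodule_def by blast
  then have "?G \<noteq> {0}" using G1G by blast
  then have GF: "?G \<in> Fbar D" using subG unfolding Fbar_def by blast
  have "finite (S1 \<union> S2)" using S1(1) S2(1) by simp
  then have Gfg: "?G \<in> fgset D" unfolding fgset_def using GF by blast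
  have st1: "st G1 \<subseteq> st ?G" by (rule st_mono[OF fg_Fbar[OF G1(1)] GF G1G])
  have st2: "st G2 \<subseteq> st ?G" by (rule st_mono[OF fg_Fbar[OF G2(1)] GF G2G])
  have "insert s S \<subseteq> st ?G" using G1(3) G2(3) st1 st2 by blast
  then show ?case using Gfg GQ by blast
qed


lemma maxS:
  assumes "M \<in> QMax D (star_f D st)"
  shows "ideal_of D M \<and> 0 \<in> M \<and> 1 \<notin> M \<and> star_f D st M \<inter> D = M"
proof -
  have J: "quasi_ideal D (star_f D st) M" "M \<noteq> D" using assms unfolding QMax_def by auto
  have "1 \<notin> M" by (rule quasi_one[OF J])
  moreover have "ideal_of D M" "star_f D st M \<inter> D = M" using J(1) unfolding quasi_ideal_def by auto
  moreover have "0 \<in> M" using \<open>ideal_of D M\<close> unfolding ideal_of_def submodule_def by auto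
  ultimately show ?thesis by blast
qed

lemma B1:
  assumes Qi: "ideal_of D Q" "Q \<noteq> {0}" and H: "\<forall>F\<in>fgset D. F \<subseteq> Q \<longrightarrow> 1 \<notin> st F"
  shows "\<exists>M\<in>QMax D (star_f D st). Q \<subseteq> M"
proof -
  let ?sf = "star_f D st"
  have Qs: "submodule D Q" using Qi unfolding ideal_of_def by blast
  define I where "I = ?sf Q \<inter> D"
  have QI: "Q \<subseteq> I" using sub_sf[OF Qs Qi(2)] Qi(1) unfolding I_def ideal_of_def by blast
  have I0: "0 \<in> I" using QI Qs unfolding submodule_def by blast
  have Iadd: "\<forall>a\<in>I. \<forall>b\<in>I. a+b \<in> I"
  proof (intro ballI)
    fix a b assume ab: "a \<in> I" "b \<in> I"
    then have "{a,b} \<subseteq> ?sf Q" unfolding I_def by blast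
    have "\<exists>G\<in>fgset D. G \<subseteq> Q \<and> {a,b} \<subseteq> st G"
      by (rule dir[OF Qs Qi(2) _ \<open>{a,b} \<subseteq> ?sf Q\<close>]) simp
    then obtain G where G: "G \<in> fgset D" "G \<subseteq> Q" "{a,b} \<subseteq> st G" by blast
    have abG: "a \<in> st G" "b \<in> st G" using G(3) by auto
    have "\<forall>x\<in>st G. \<forall>y\<in>st G. x + y \<in> st G" using st_sub[OF fg_Fbar[OF G(1)]] unfolding submodule_def by blast
    then have "a + b \<in> st G" using abG by blast
    then have "a+b \<in> ?sf Q" unfolding sf_iff using G(1,2) by blast
    moreover have "a+b \<in> D" using ab Dadd unfolding I_def by blast
    ultimately show "a+b \<in> I" unfolding I_def by blast
  qed
  have Imul: "\<forall>d\<in>D. \<forall>a\<in>I. d*a \<in> I"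
  proof (intro ballI)
    fix d a assume da: "d \<in> D" "a \<in> I"
    have "a \<in> ?sf Q" using da(2) unfolding I_def by blast
    then obtain G where G: "G \<in> fgset D" "G \<subseteq> Q" "a \<in> st G" unfolding sf_iff by blast
    have "d*a \<in> st G" using G(3) da st_sub[OF fg_Fbar[OF G(1)]] unfolding submodule_def by blast
    then have "d*a \<in> ?sf Q" unfolding sf_iff using G(1,2) by blast
    moreover have "d*a \<in> D" using da Dmul unfolding I_def by blast
    ultimately show "d*a \<in> I" unfolding I_def by blast
  qed
  have Isub: "submodule D I" unfolding submodule_def using I0 Iadd Imul by blast
  have IID: "ideal_of D I" unfolding ideal_of_def using Isub unfolding I_def by blast
  have Inz: "I \<noteq> {0}" using QI Qi(2) Qs unfolding submodule_def by blast
  have I1: "1 \<notin> I"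
  proof
    assume "1 \<in> I"
    then have "1 \<in> ?sf Q" unfolding I_def by blast
    then obtain F where "F\<in>fgset D" "F \<subseteq> Q" "1 \<in> st F" unfolding sf_iff by blast
    then show False using H by blast
  qed
  have Iq: "?sf I \<inter> D = I"
  proof
    show "I \<subseteq> ?sf I \<inter> D" using sub_sf[OF Isub Inz] unfolding I_def by blast
    show "?sf I \<inter> D \<subseteq> I"
    proof
      fix x assume x: "x \<in> ?sf I \<inter> D"
      then have "x \<in> ?sf I" by blast
      then obtain F where F: "F \<in> fgset D" "F \<subseteq> I" "x \<in> st F" unfolding sf_iff by blast
      obtain S where S: "finite S" "F = gen_mod D S" "S \<subseteq> F" using fg_gen[OF F(1)] by blast
      have "S \<subseteq> ?sf Q" using S(3) F(2) unfolding I_def by blast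
      then have "\<exists>G\<in>fgset D. G \<subseteq> Q \<and> S \<subseteq> st G" by (rule dir[OF Qs Qi(2) S(1)])
      then obtain G where G: "G \<in> fgset D" "G \<subseteq> Q" "S \<subseteq> st G" by blast
      have "F \<subseteq> st G" unfolding S(2) by (rule gen_mod_sub[OF st_sub[OF fg_Fbar[OF G(1)]] G(3)])
      then have "st F \<subseteq> st (st G)" by (rule st_mono[OF fg_Fbar[OF F(1)] st_Fbar[OF fg_Fbar[OF G(1)]]])
      then have "x \<in> st G" using F(3) st_idem[OF fg_Fbar[OF G(1)]] by blast
      then have "x \<in> ?sf Q" unfolding sf_iff using G(1,2) by blast
      then show "x \<in> I" using x unfolding I_def by blast
    qed
  qed
  define T where "T = {J. quasi_ideal D ?sf J \<and> J \<noteq> D \<and> Q \<subseteq> J}"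
  have "I \<noteq> D" using I1 D1 by blast
  then have IT: "I \<in> T" unfolding T_def quasi_ideal_def using IID Inz Iq QI by simp
  have "\<exists>M\<in>T. \<forall>X\<in>T. M \<subseteq> X \<longrightarrow> X = M"
  proof (rule subset_Zorn_nonempty)
    show "T \<noteq> {}" using IT by blast
  next
    fix C assume C: "C \<noteq> {}" "subset.chain T C"
    have CT: "C \<subseteq> T" using C(2) by (auto simp: subset.chain_def)
    have ch: "\<forall>A\<in>C. \<forall>B\<in>C. A \<subseteq> B \<or> B \<subseteq> A" using C(2) by (auto simp: subset.chain_def)
    let ?U = "\<Union>C"
    have Jp: "ideal_of D J \<and> ?sf J \<inter> D = J \<and> 1 \<notin> J \<and> Q \<subseteq> J" if "J \<in> C" for J
    proof -
      have J: "quasi_ideal D ?sf J" "J \<noteq> D" "Q \<subseteq> J" using CT that unfolding T_def by auto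
      have "1 \<notin> J" by (rule quasi_one[OF J(1,2)])
      moreover have "ideal_of D J" "?sf J \<inter> D = J" using J(1) unfolding quasi_ideal_def by auto
      ultimately show ?thesis using J(3) by blast
    qed
    obtain J0 where J0: "J0 \<in> C" using C(1) by blast
    have UD: "?U \<subseteq> D" using Jp unfolding ideal_of_def by blast
    have U0: "0 \<in> ?U" using Jp[OF J0] J0 unfolding ideal_of_def submodule_def by blast
    have Uadd: "\<forall>a\<in>?U. \<forall>b\<in>?U. a+b \<in> ?U"
    proof (intro ballI)
      fix a b assume "a \<in> ?U" "b \<in> ?U"
      then obtain A B where AB: "A\<in>C" "B\<in>C" "a\<in>A" "b\<in>B" by blast
      show "a+b \<in> ?U"
      proof (cases "A \<subseteq> B")
        case True then show ?thesis using AB Jp[OF AB(2)] unfolding ideal_of_def submodule_def by blast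
      next
        case False then have "B \<subseteq> A" using ch AB by blast
        then show ?thesis using AB Jp[OF AB(1)] unfolding ideal_of_def submodule_def by blast
      qed
    qed
    have Umul: "\<forall>d\<in>D. \<forall>a\<in>?U. d*a \<in> ?U"
    proof (intro ballI)
      fix d a assume "d \<in> D" "a \<in> ?U"
      then obtain A where "A \<in> C" "a \<in> A" by blast
      then show "d*a \<in> ?U" using Jp[OF \<open>A \<in> C\<close>] \<open>d \<in> D\<close> unfolding ideal_of_def submodule_def by blast
    qed
    have Usub: "submodule D ?U" unfolding submodule_def using U0 Uadd Umul by blast
    have QU: "Q \<subseteq> ?U" using Jp[OF J0] J0 by blast
    have Unz: "?U \<noteq> {0}" using QU Qi(2) Qs unfolding submodule_def by blast
    have U1: "1 \<notin> ?U" using Jp by blast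
    have Uq: "?sf ?U \<inter> D = ?U"
    proof
      show "?U \<subseteq> ?sf ?U \<inter> D" using sub_sf[OF Usub Unz] UD by blast
      show "?sf ?U \<inter> D \<subseteq> ?U"
      proof
        fix x assume x: "x \<in> ?sf ?U \<inter> D"
        then have "x \<in> ?sf ?U" by blast
        then obtain F where F: "F \<in> fgset D" "F \<subseteq> ?U" "x \<in> st F" unfolding sf_iff by blast
        obtain S where S: "finite S" "F = gen_mod D S" "S \<subseteq> F" using fg_gen[OF F(1)] by blast
        have "S \<subseteq> ?U" using S(3) F(2) by blast
        then obtain J where J: "J \<in> C" "S \<subseteq> J" using finite_subset_Union_chain[OF S(1) _ C(1) C(2)] by blast
        have "submodule D J" using Jp[OF J(1)] unfolding ideal_of_def by blast
        then have "F \<subseteq> J" unfolding S(2) using gen_mod_sub J(2) by blast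
        then have "x \<in> ?sf J" unfolding sf_iff using F(1,3) by blast
        then have "x \<in> ?sf J \<inter> D" using x by blast
        then show "x \<in> ?U" using Jp[OF J(1)] J(1) by blast
      qed
    qed
    have "?U \<noteq> D" using U1 D1 by blast
    moreover have "ideal_of D ?U" unfolding ideal_of_def using UD Usub by simp
    ultimately show "?U \<in> T" unfolding T_def quasi_ideal_def using Unz Uq QU by simp
  qed
  then obtain M where M: "M \<in> T" "\<forall>X\<in>T. M \<subseteq> X \<longrightarrow> X = M" by blast
  have QM: "Q \<subseteq> M" using M(1) unfolding T_def by simp
  have "M \<in> QMax D ?sf" unfolding QMax_def
  proof (intro CollectI conjI allI impI)
    show "quasi_ideal D ?sf M" "M \<noteq> D" using M(1) unfolding T_def by auto
    fix N assume N: "quasi_ideal D ?sf N \<and> N \<noteq> D \<and> M \<subseteq> N"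
    then have "N \<in> T" using QM unfolding T_def by auto
    then show "N = M" using M(2) N by blast
  qed
  then show ?thesis using QM by blast
qed

lemma A1:
  assumes "P \<in> QSpec D (tilde D st)"
  shows "\<exists>M\<in>QMax D (star_f D st). P \<subseteq> M"
proof (rule ccontr)
  assume nb: "\<not> ?thesis"
  have P: "quasi_ideal D (tilde D st) P" "prime_ideal D P" using assms unfolding QSpec_def by auto
  have "1 \<in> tilde D st P"
    unfolding tilde_def
  proof (rule InterI)
    fix X assume "X \<in> {ext_loc D M P | M. M \<in> QMax D (star_f D st)}"
    then obtain M where M: "M \<in> QMax D (star_f D st)" "X = ext_loc D M P" by blast
    obtain s where s: "s \<in> P" "s \<notin> M" using nb M(1) by blast
    have "s \<noteq> 0" using s maxS[OF M(1)] by blast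
    have "s \<in> D" using s P(1) unfolding quasi_ideal_def ideal_of_def by blast
    have "1 = s / s" using \<open>s\<noteq>0\<close> by simp
    then show "1 \<in> X" unfolding M(2) ext_loc_def using s \<open>s\<in>D\<close> by blast
  qed
  then have "1 \<in> P" using P(1) D1 unfolding quasi_ideal_def by blast
  then show False using P(2) unfolding prime_ideal_def by blast
qed

lemma dirA:
  assumes P: "P \<in> QSpec D (tilde D st)" and V: "valuation_overring (localization D P) V"
  shows "star_valuation_overring D (tilde D st) V"
proof -
  have Pp: "prime_ideal D P" using P unfolding QSpec_def by auto
  have LV: "localization D P \<subseteq> V" "subring V" "\<forall>x. x\<noteq>0 \<longrightarrow> x\<in>V \<or> inverse x \<in> V"
    using V unfolding valuation_overring_def by auto
  have DL: "D \<subseteq> localization D P"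
  proof
    fix d assume "d \<in> D"
    have "d = d / 1" by simp
    then show "d \<in> localization D P" unfolding localization_def
      using \<open>d\<in>D\<close> D1 Pp unfolding prime_ideal_def by blast
  qed
  obtain M where M: "M \<in> QMax D (star_f D st)" "P \<subseteq> M" using A1[OF P] by blast
  have "\<forall>F\<in>fgset D. tilde D st F \<subseteq> gen_mod V F"
  proof (intro ballI subsetI)
    fix F x assume F: "F \<in> fgset D" and x: "x \<in> tilde D st F"
    have "x \<in> ext_loc D M F" using x M(1) unfolding tilde_def by blast
    then obtain e s where es: "x = e / s" "e \<in> F" "s \<in> D" "s \<notin> M" unfolding ext_loc_def by blast
    have "1 / s \<in> localization D P" unfolding localization_def using D1 es M(2) by blast
    then have "1/s \<in> V" using LV by blast
    then have "(1/s) * e \<in> gen_mod V F" using gen_mod_single es by blast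
    then show "x \<in> gen_mod V F" using es by simp
  qed
  then show ?thesis unfolding star_valuation_overring_def valuation_overring_def using LV DL by blast
qed

lemma dirB:
  assumes V: "star_valuation_overring D (tilde D st) V"
  shows "V = UNIV \<or> (\<exists>Q\<in>QSpec D (tilde D st). valuation_overring (localization D Q) V)"
proof -
  have Vs: "subring V" "D \<subseteq> V" and val: "\<And>x. x\<noteq>0 \<Longrightarrow> x\<in>V \<or> inverse x \<in> V"
    and stv: "\<And>F. F\<in>fgset D \<Longrightarrow> tilde D st F \<subseteq> gen_mod V F"
    using V unfolding star_valuation_overring_def valuation_overring_def by auto
  have V0: "0\<in>V" and V1: "1\<in>V" and Vadd: "\<And>a b. a\<in>V \<Longrightarrow> b\<in>V \<Longrightarrow> a+b\<in>V"
    and Vmul: "\<And>a b. a\<in>V \<Longrightarrow> b\<in>V \<Longrightarrow> a*b\<in>V"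
    using Vs(1) unfolding subring_def by auto
  define N where "N = {x\<in>V. x = 0 \<or> inverse x \<notin> V}"
  have N0: "0 \<in> N" using V0 N_def by simp
  have N1: "1 \<notin> N" using V1 N_def by simp
  have Nmul: "v*a \<in> N" if v: "v\<in>V" and a: "a\<in>N" for v a
  proof (cases "v*a = 0")
    case True then show ?thesis using N0 by metis
  next
    case False
    then have nz: "v\<noteq>0" "a\<noteq>0" by auto
    have "inverse (v*a) \<notin> V"
    proof
      assume "inverse (v*a) \<in> V"
      then have "v * inverse (v*a) \<in> V" using Vmul v by blast
      moreover have eq: "v * inverse (v*a) = inverse a" using nz by (simp add: field_simps)
      ultimately have "inverse a \<in> V" by metis
      then show False using a nz unfolding N_def by blast
    qed
    then show ?thesis using Vmul v a N_def by simp
  qed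
  have Nadd: "a+b \<in> N" if a: "a\<in>N" and b: "b\<in>N" for a b
  proof -
    have ab: "a\<in>V" "b\<in>V" using a b N_def by auto
    show "a+b \<in> N"
    proof (cases "a = 0 \<or> b = 0 \<or> a + b = 0")
      case True then show ?thesis using a b N0 by auto
    next
      case False
      then have nz: "a\<noteq>0" "b\<noteq>0" "a+b\<noteq>0" by auto
      show ?thesis
      proof (rule ccontr)
        assume "a+b \<notin> N"
        then have inv: "inverse (a+b) \<in> V" using Vadd ab nz N_def by auto
        from val[of "a/b"] nz have "a/b \<in> V \<or> inverse (a/b) \<in> V" by simp
        then show False
        proof
          assume h: "a/b \<in> V"
          have eq: "inverse b = inverse (a+b) * (1 + a/b)" using nz by (simp add: field_simps)
          have "inverse (a+b) * (1 + a/b) \<in> V" by (rule Vmul[OF inv Vadd[OF V1 h]])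
          then have "inverse b \<in> V" using eq by metis
          then show False using b nz unfolding N_def by blast
        next
          assume h: "inverse (a/b) \<in> V"
          have eq: "inverse a = inverse (a+b) * (1 + inverse (a/b))" using nz by (simp add: field_simps)
          have "inverse (a+b) * (1 + inverse (a/b)) \<in> V" by (rule Vmul[OF inv Vadd[OF V1 h]])
          then have "inverse a \<in> V" using eq by metis
          then show False using a nz unfolding N_def by blast
        qed
      qed
    qed
  qed
  have Nsub: "submodule V N" unfolding submodule_def using N0 Nadd Nmul by blast
  define Q where "Q = N \<inter> D"
  show ?thesis
  proof (cases "Q = {0}")
    case True
    have "x \<in> V" for x
    proof -
      obtain a b where ab: "a\<in>D" "b\<in>D" "b\<noteq>0" "x = a/b" using dom unfolding domain_with_qf_def by blast
      then have "b \<notin> N" using True unfolding Q_def by blast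
      then have "inverse b \<in> V" using ab Vs(2) unfolding N_def by blast
      then show "x \<in> V" using ab Vs(2) Vmul by (auto simp: divide_inverse)
    qed
    then show ?thesis by blast
  next
    case False
    have q1: "0 \<in> Q" using N0 D0 unfolding Q_def by blast
    have q2: "\<forall>a\<in>Q. \<forall>b\<in>Q. a + b \<in> Q" unfolding Q_def using Nadd Dadd by blast
    have q3: "\<forall>d\<in>D. \<forall>a\<in>Q. d * a \<in> Q" unfolding Q_def using Nmul Dmul Vs(2) by blast
    have Qsub: "submodule D Q" unfolding submodule_def using q1 q2 q3 by blast
    have Qideal: "ideal_of D Q" unfolding ideal_of_def using Qsub Q_def by blast
    have Qprime: "prime_ideal D Q" unfolding prime_ideal_def
    proof (intro conjI ballI impI)
      show "ideal_of D Q" by fact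
      show "1 \<notin> Q" using N1 Q_def by blast
    next
      fix a b assume a: "a \<in> D" and b: "b \<in> D" and abQ: "a*b \<in> Q"
      show "a \<in> Q \<or> b \<in> Q"
      proof (rule ccontr)
        assume "\<not> (a \<in> Q \<or> b \<in> Q)"
        then have "a \<notin> N" "b \<notin> N" using a b Q_def by auto
        then have ia: "a \<noteq> 0" "inverse a \<in> V" and ib: "b \<noteq> 0" "inverse b \<in> V"
          using a b Vs(2) unfolding N_def by auto
        have "inverse (a*b) \<in> V" using ia ib Vmul by (simp add: mult.commute)
        moreover have "a*b \<noteq> 0" using ia ib by simp
        ultimately show False using abQ unfolding Q_def N_def by blast
      qed
    qed
    have H: "\<forall>F\<in>fgset D. F \<subseteq> Q \<longrightarrow> 1 \<notin> st F"
    proof (intro ballI impI notI)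
      fix F assume F: "F \<in> fgset D" "F \<subseteq> Q" "1 \<in> st F"
      have "1 \<in> tilde D st F" unfolding tilde_def
      proof (rule InterI)
        fix X assume "X \<in> {ext_loc D M F | M. M \<in> QMax D (star_f D st)}"
        then obtain M where M: "M \<in> QMax D (star_f D st)" "X = ext_loc D M F" by blast
        have "\<not> F \<subseteq> M"
        proof
          assume "F \<subseteq> M"
          then have "1 \<in> star_f D st M" unfolding sf_iff using F by blast
          then show False using maxS[OF M(1)] D1 by blast
        qed
        then obtain f where f: "f\<in>F" "f\<notin>M" by blast
        have "f \<noteq> 0" using f maxS[OF M(1)] by blast
        have "f \<in> D" using f F Q_def by blast
        have "1 = f/f" using \<open>f\<noteq>0\<close> by simp
        then show "1 \<in> X" unfolding M(2) ext_loc_def using f \<open>f\<in>D\<close> by blast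
      qed
      then have "1 \<in> gen_mod V F" using stv[OF F(1)] by blast
      moreover have "gen_mod V F \<subseteq> N" by (rule gen_mod_sub[OF Nsub]) (use F Q_def in blast)
      ultimately show False using N1 by blast
    qed
    obtain M where M: "M \<in> QMax D (star_f D st)" "Q \<subseteq> M" using B1[OF Qideal False H] by blast
    have Qq: "tilde D st Q \<inter> D = Q"
    proof
      show "tilde D st Q \<inter> D \<subseteq> Q"
      proof
        fix x assume x: "x \<in> tilde D st Q \<inter> D"
        then have "x \<in> ext_loc D M Q" using M(1) unfolding tilde_def by blast
        then obtain e s where es: "x = e/s" "e\<in>Q" "s\<in>D" "s\<notin>M" unfolding ext_loc_def by blast
        have "s \<noteq> 0" using es maxS[OF M(1)] by blast
        have "x * s = e" using es \<open>s\<noteq>0\<close> by simp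
        then have "x*s \<in> Q" using es by simp
        moreover have "s \<notin> Q" using es M(2) by blast
        ultimately show "x \<in> Q" using Qprime x es unfolding prime_ideal_def by blast
      qed
      show "Q \<subseteq> tilde D st Q \<inter> D"
      proof
        fix q assume q: "q \<in> Q"
        have "q \<in> tilde D st Q" unfolding tilde_def
        proof (rule InterI)
          fix X assume "X \<in> {ext_loc D M Q | M. M \<in> QMax D (star_f D st)}"
          then obtain M' where M': "M' \<in> QMax D (star_f D st)" "X = ext_loc D M' Q" by blast
          have "q = q / 1" by simp
          then show "q \<in> X" unfolding M'(2) ext_loc_def using q D1 maxS[OF M'(1)] by blast
        qed
        then show "q \<in> tilde D st Q \<inter> D" using q Q_def by blast
      qed
    qed
    have QS: "Q \<in> QSpec D (tilde D st)" unfolding QSpec_def quasi_ideal_def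
      using Qideal False Qq Qprime by blast
    have "localization D Q \<subseteq> V"
    proof
      fix y assume "y \<in> localization D Q"
      then obtain a s where as: "y = a/s" "a\<in>D" "s\<in>D" "s\<notin>Q" unfolding localization_def by blast
      have "s \<notin> N" using as Q_def by blast
      then have "inverse s \<in> V" using Vs(2) as unfolding N_def by blast
      then show "y \<in> V" using as Vs(2) Vmul by (auto simp: divide_inverse)
    qed
    then have "valuation_overring (localization D Q) V"
      unfolding valuation_overring_def using Vs val by blast
    then show ?thesis using QS by blast
  qed
qed

end

lemma krull_univ: "krull_dim (UNIV :: 'k::field set) \<le> 0"
proof -
  have pz: "P = {0}" if "prime_ideal (UNIV::'k set) P" for P :: "'k set"
  proof -
    have s: "submodule UNIV P" using that unfolding prime_ideal_def ideal_of_def by blast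
    have "p = 0" if p: "p \<in> P" for p
    proof (rule ccontr)
      assume "p \<noteq> 0"
      then have "inverse p * p = 1" by simp
      moreover have "inverse p * p \<in> P" using s p unfolding submodule_def by blast
      ultimately show False using \<open>prime_ideal UNIV P\<close> unfolding prime_ideal_def by simp
    qed
    then show "P = {0}" using s unfolding submodule_def by blast
  qed
  show ?thesis unfolding krull_dim_def
  proof (rule Sup_least)
    fix x assume "x \<in> {enat n |n. \<exists>c. (\<forall>i\<le>n. prime_ideal (UNIV::'k set) (c i)) \<and> (\<forall>i<n. c i \<subset> c (Suc i))}"
    then obtain n c where x: "x = enat n" and c: "\<forall>i\<le>n. prime_ideal (UNIV::'k set) (c i)" "\<forall>i<n. c i \<subset> c (Suc i)"
      by blast
    show "x \<le> 0"
    proof (cases n)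
      case 0 then show ?thesis using x by (simp add: zero_enat_def)
    next
      case (Suc m)
      have "c 0 = {0}" "c (Suc 0) = {0}" using c(1) pz Suc by auto
      moreover have "c 0 \<subset> c (Suc 0)" using c(2) Suc by auto
      ultimately show ?thesis by simp
    qed
  qed
qed

theorem lemma2p5:
  fixes D :: "'k::field set" and st :: "'k set \<Rightarrow> 'k set"
  assumes "domain_with_qf D"
    and "semistar D st"
  shows "star_dim_v D (tilde D st) = (SUP P \<in> QSpec D (tilde D st). dim_v (localization D P))"
proof (rule antisym)
  show "star_dim_v D (tilde D st) \<le> (SUP P \<in> QSpec D (tilde D st). dim_v (localization D P))"
    unfolding star_dim_v_def
  proof (rule SUP_least)
    fix V assume "V \<in> {V. star_valuation_overring D (tilde D st) V}"
    then have "V = UNIV \<or> (\<exists>Q\<in>QSpec D (tilde D st). valuation_overring (localization D Q) V)"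
      using dirB[OF assms] by blast
    then show "krull_dim V \<le> (SUP P \<in> QSpec D (tilde D st). dim_v (localization D P))"
    proof
      assume "V = UNIV" then show ?thesis using krull_univ by (metis order_trans zero_le)
    next
      assume "\<exists>Q\<in>QSpec D (tilde D st). valuation_overring (localization D Q) V"
      then obtain Q where Q: "Q \<in> QSpec D (tilde D st)" "valuation_overring (localization D Q) V" by blast
      have "krull_dim V \<le> dim_v (localization D Q)" unfolding dim_v_def by (rule SUP_upper) (use Q in simp)
      also have "\<dots> \<le> (SUP P \<in> QSpec D (tilde D st). dim_v (localization D P))" by (rule SUP_upper) (use Q in simp)
      finally show ?thesis .
    qed
  qed
  show "(SUP P \<in> QSpec D (tilde D st). dim_v (localization D P)) \<le> star_dim_v D (tilde D st)"
  proof (rule SUP_least)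
    fix P assume P: "P \<in> QSpec D (tilde D st)"
    show "dim_v (localization D P) \<le> star_dim_v D (tilde D st)" unfolding dim_v_def
    proof (rule SUP_least)
      fix V assume "V \<in> {V. valuation_overring (localization D P) V}"
      then have "star_valuation_overring D (tilde D st) V" using dirA[OF assms P] by blast
      then show "krull_dim V \<le> star_dim_v D (tilde D st)" unfolding star_dim_v_def by (intro SUP_upper) simp
    qed
  qed
qed

end
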